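(* Let $\mathcal S$ be a collection of nonempty subsets of a set $X$ with a basis $\mathcal B\subseteq\mathcal S$. Then for every $A\in\mathcal B$, $[A]_{\mathcal S}\subseteq\mathcal B$.
   Context: Fix a nonempty set $X$; $A^c:=X\setminus A$. $A\perp B$ means $A\cap B=\emptyset$ and $A\ne B^c$. $A$ dominates $B$ if $A\supseteq B$ or $A\supseteq B^c$. A collection is orthogonal if any two distinct members are orthogonal. A basis for $\mathcal S$ is an orthogonal $\mathcal B\subseteq\mathcal S$ such that every member of $\mathcal S$ is dominated by some member of $\mathcal B$. For $A,B\in\mathcal S$, $B$ is $\mathcal S$-maximally orthogonal to $A$ if $B\perp A$ and no $C\in\mathcal S$ satisfies $C\perp A$, $C\supsetneq B$; $[A]_{\mathcal S}:=\{A\}\cup\{B\in\mathcal S:B$ is $\mathcal S$-maximally orthogonal to $A\}$. *)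

theory Defs
  imports Main
begin

definition orth :: "'a set \<Rightarrow> 'a set \<Rightarrow> 'a set \<Rightarrow> bool" where
  "orth X A B \<longleftrightarrow> A \<inter> B = {} \<and> A \<noteq> X - B"

definition dominates :: "'a set \<Rightarrow> 'a set \<Rightarrow> 'a set \<Rightarrow> bool" where
  "dominates X A B \<longleftrightarrow> B \<subseteq> A \<or> X - B \<subseteq> A"

definition orthogonal_coll :: "'a set \<Rightarrow> 'a set set \<Rightarrow> bool" where
  "orthogonal_coll X \<C> \<longleftrightarrow> (\<forall>A\<in>\<C>. \<forall>B\<in>\<C>. A \<noteq> B \<longrightarrow> orth X A B)"

definition is_basis :: "'a set \<Rightarrow> 'a set set \<Rightarrow> 'a set set \<Rightarrow> bool" where
  "is_basis X \<S> \<B> \<longleftrightarrow> \<B> \<subseteq> \<S> \<and> orthogonal_coll X \<B> \<and>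
     (\<forall>S\<in>\<S>. \<exists>B\<in>\<B>. dominates X B S)"

definition max_orth :: "'a set \<Rightarrow> 'a set set \<Rightarrow> 'a set \<Rightarrow> 'a set \<Rightarrow> bool" where
  "max_orth X \<S> A B \<longleftrightarrow> orth X B A \<and> \<not> (\<exists>C\<in>\<S>. orth X C A \<and> B \<subset> C)"

definition orth_class :: "'a set \<Rightarrow> 'a set set \<Rightarrow> 'a set \<Rightarrow> 'a set set" where
  "orth_class X \<S> A = {A} \<union> {B \<in> \<S>. max_orth X \<S> A B}"

end

theory Submission
  imports Defs
begin

theorem mainTheorem12:
  fixes X :: "'a set" and \<S> \<B> :: "'a set set"
  assumes "X \<noteq> {}"
    and "\<forall>S\<in>\<S>. S \<noteq> {} \<and> S \<subseteq> X"
    and "is_basis X \<S> \<B>"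
    and "A \<in> \<B>"
  shows "orth_class X \<S> A \<subseteq> \<B>"
proof
  fix B assume "B \<in> orth_class X \<S> A"
  then consider "B = A" | "B \<in> \<S>" "max_orth X \<S> A B" unfolding orth_class_def by blast
  then show "B \<in> \<B>"
  proof cases
    case 1 then show ?thesis using assms(4) by simp
  next
    case 2
    have bs: "\<B> \<subseteq> \<S>" and oc: "orthogonal_coll X \<B>" and dom: "\<forall>S\<in>\<S>. \<exists>D\<in>\<B>. dominates X D S"
      using assms(3) unfolding is_basis_def by auto
    have AS: "A \<in> \<S>" using bs assms(4) by auto
    have Ane: "A \<noteq> {}" "A \<subseteq> X" using assms(2) AS by auto
    have Bne: "B \<noteq> {}" "B \<subseteq> X" using assms(2) 2(1) by auto
    have ob: "B \<inter> A = {}" "B \<noteq> X - A" and mx: "\<not> (\<exists>C\<in>\<S>. orth X C A \<and> B \<subset> C)"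
      using 2(2) unfolding max_orth_def orth_def by auto
    obtain D where D: "D \<in> \<B>" "dominates X D B" using dom 2(1) by blast
    have oDA: "D \<noteq> A \<Longrightarrow> orth X D A" using oc D(1) assms(4) unfolding orthogonal_coll_def by blast
    show ?thesis
    proof (cases "B \<subseteq> D")
      case True
      have "D \<noteq> A" using True ob Bne by blast
      hence "orth X D A" by (rule oDA)
      moreover have "D \<in> \<S>" using D bs by auto
      ultimately have "\<not> B \<subset> D" using mx by blast
      hence "B = D" using True by blast
      then show ?thesis using D by simp
    next
      case False
      hence sub: "X - B \<subseteq> D" using D(2) unfolding dominates_def by blast
      have "A \<subseteq> X - B" using ob Ane by blast
      hence AD: "A \<subseteq> D" using sub by blast
      show ?thesis
      proof (cases "D = A")
        case True
        hence "A = X - B" using sub \<open>A \<subseteq> X - B\<close> by blast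
        hence "B = X - A" using Bne by blast
        then show ?thesis using ob by blast
      next
        case False
        hence "D \<inter> A = {}" using oDA unfolding orth_def by blast
        then show ?thesis using AD Ane by blast
      qed
    qed
  qed
qed

end
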